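(* Let $f:\mathbb{R}^n\to\mathbb{R}^n$ be a single-valued mapping which is continuously differentiable around a point $\bar x\in\mathbb{R}^n$, and let $\varepsilon>0$. Suppose there is $\delta>0$ such that for each $x\in B[\bar x,\delta]$ we have $$\|f(x)-f(\bar x)-\nabla f(x)(x-\bar x)\|\le \varepsilon\|x-\bar x\|.$$ Then for each $x\in B[\bar x,\delta]$ and each $(y^*,x^* )\in \operatorname{gph} D^*f(x,f(x))$ we have $$\big|\langle x^*,x-\bar x\rangle-\langle y^*,f(x)-f(\bar x)\rangle\big|\le \varepsilon\,\|(x^*,y^* )\|\,\|(x,f(x))-(\bar x,f(\bar x))\|.$$
   Context: $B[z,r]$ denotes the closed ball of radius $r$ centered at $z$. On $\mathbb{R}^n$ the Euclidean norm is used; on a product of Euclidean spaces the norm is $\|(a,b)\|:=\max\{\|a\|,\|b\|\}$. $\nabla f(x)$ is the Jacobian of $f$ at $x$. For a set-valued map $F:\mathbb{R}^n\rightrightarrows\mathbb{R}^m$ and $(x,y)\in\operatorname{gph}F$, the limiting (Mordukhovich) coderivative $D^*F(x,y):\mathbb{R}^m\rightrightarrows\mathbb{R}^n$ is defined by $\operatorname{gph}D^*F(x,y)=\{(y^*,x^* ):(x^*,-y^* )\in N_{\operatorname{gph}F}(x,y)\}$, where $N$ denotes the limiting normal cone; a single-valued $f$ is identified with the map $x\mapsto\{f(x)\}$. *)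

theory Defs
  imports "HOL-Analysis.Analysis"
begin

definition frechet_normal_cone :: "'a::real_inner set \<Rightarrow> 'a \<Rightarrow> 'a set" where
  "frechet_normal_cone S z =
     (if z \<in> S then {v. \<forall>e>0. \<exists>d>0. \<forall>z'\<in>S. norm (z' - z) < d \<longrightarrow>
                                      inner v (z' - z) \<le> e * norm (z' - z)}
      else {})"

definition limiting_normal_cone :: "'a::real_inner set \<Rightarrow> 'a \<Rightarrow> 'a set" where
  "limiting_normal_cone S z =
     (if z \<in> S then {v. \<exists>zs vs. (\<forall>k. zs k \<in> S \<and> vs k \<in> frechet_normal_cone S (zs k))
                             \<and> zs \<longlonglongrightarrow> z \<and> vs \<longlonglongrightarrow> v}
      else {})"

definition fgraph :: "('a \<Rightarrow> 'b) \<Rightarrow> ('a \<times> 'b) set" where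
  "fgraph f = {(x, f x) | x. True}"

definition coderiv_graph :: "('a::real_inner \<Rightarrow> 'b::real_inner) \<Rightarrow> 'a \<Rightarrow> ('b \<times> 'a) set" where
  "coderiv_graph f x = {(ys, xs). (xs, - ys) \<in> limiting_normal_cone (fgraph f) (x, f x)}"

definition pnorm :: "('a::real_normed_vector \<times> 'b::real_normed_vector) \<Rightarrow> real" where
  "pnorm p = max (norm (fst p)) (norm (snd p))"

end

theory Submission
  imports Defs
begin

lemma frechet_graph_le:
  fixes f :: "'a::real_inner \<Rightarrow> 'b::real_inner"
  assumes d: "(f has_derivative L) (at z)"
    and v: "v \<in> frechet_normal_cone (fgraph f) (z, f z)"
  shows "inner (fst v) h + inner (snd v) (L h) \<le> 0"
proof -
  define p where "p t = (z + t *\<^sub>R h, f (z + t *\<^sub>R h))" for t :: real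
  define D where "D = (h, L h)"
  have "((\<lambda>t. z + t *\<^sub>R h) has_derivative (\<lambda>t. t *\<^sub>R h)) (at 0)"
    by (auto intro!: derivative_eq_intros)
  from has_derivative_compose[OF this, of f L] d
  have "((\<lambda>t. f (z + t *\<^sub>R h)) has_derivative (\<lambda>t. L (t *\<^sub>R h))) (at 0)" by simp
  moreover have "bounded_linear L" using d has_derivative_bounded_linear by blast
  ultimately have "((\<lambda>t. f (z + t *\<^sub>R h)) has_vector_derivative L h) (at 0)"
    unfolding has_vector_derivative_def by (simp add: linear_simps)
  moreover have "((\<lambda>t. z + t *\<^sub>R h) has_vector_derivative h) (at 0)"
    by (auto intro!: derivative_eq_intros)
  ultimately have "(p has_vector_derivative D) (at 0)"
    unfolding p_def D_def by (intro has_vector_derivative_Pair)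
  hence "(p has_derivative (\<lambda>t. t *\<^sub>R D)) (at 0 within {0<..})"
    unfolding has_vector_derivative_def using has_derivative_at_withinI by blast
  hence "((\<lambda>t. (p t - p 0 - (t - 0) *\<^sub>R D) /\<^sub>R norm (t - 0)) \<longlongrightarrow> 0) (at_right 0)"
    unfolding has_derivative_at_within by simp
  hence "((\<lambda>t. ((p t - p 0) /\<^sub>R t - D) + D) \<longlongrightarrow> 0 + D) (at_right 0)"
    apply (intro tendsto_add[OF _ tendsto_const])
    apply (erule Lim_transform_eventually)
    apply (simp add: eventually_at_right_less[of 0, THEN eventually_mono] )
    unfolding eventually_at_right_field
    by (auto intro!: exI[of _ 1] simp: algebra_simps divide_simps)
  hence q: "((\<lambda>t. (p t - p 0) /\<^sub>R t) \<longlongrightarrow> D) (at_right 0)" by simp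
  have c: "((\<lambda>t. inner v ((p t - p 0) /\<^sub>R t)) \<longlongrightarrow> inner v D) (at_right 0)"
    by (intro tendsto_inner tendsto_const q)
  have n: "((\<lambda>t. norm ((p t - p 0) /\<^sub>R t)) \<longlongrightarrow> norm D) (at_right 0)"
    by (intro tendsto_norm q)
  have le: "inner v D \<le> e * norm D" if e: "e > 0" for e
  proof -
    have vz: "(z, f z) \<in> fgraph f" by (auto simp: fgraph_def)
    from v vz e obtain d where d: "d > 0" and
      dd: "\<And>z'. z' \<in> fgraph f \<Longrightarrow> norm (z' - (z, f z)) < d \<Longrightarrow>
           inner v (z' - (z, f z)) \<le> e * norm (z' - (z, f z))"
      unfolding frechet_normal_cone_def by (simp only: if_True mem_Collect_eq) blast
    have "((\<lambda>t. p t - p 0) \<longlongrightarrow> 0) (at_right 0)"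
    proof -
      have "continuous (at 0) p"
        using \<open>(p has_vector_derivative D) (at 0)\<close> has_vector_derivative_continuous by blast
      hence "(p \<longlongrightarrow> p 0) (at_right 0)"
        by (simp add: continuous_at filterlim_at_split)
      thus ?thesis using Lim_null by blast
    qed
    hence ev1: "\<forall>\<^sub>F t in at_right 0. norm (p t - p 0) < d"
      using d tendsto_iff[THEN iffD1, rule_format, of "\<lambda>t. p t - p 0" 0 "at_right 0" d] by (simp add: dist_norm)
    have ev: "\<forall>\<^sub>F t in at_right 0. inner v ((p t - p 0) /\<^sub>R t) \<le> e * norm ((p t - p 0) /\<^sub>R t)"
      using ev1 eventually_at_right_less[of 0]
    proof eventually_elim
      case (elim t)
      have pt: "p t \<in> fgraph f" by (auto simp: fgraph_def p_def)
      have p0: "p 0 = (z, f z)" by (simp add: p_def)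
      have "inner v (p t - p 0) \<le> e * norm (p t - p 0)" using dd[OF pt] elim p0 by simp
      thus ?case using elim by (simp add: inner_scaleR_right)
    qed
    show ?thesis
      by (rule tendsto_le[OF _ tendsto_mult[OF tendsto_const n] c ev]) simp
  qed
  have "inner v D \<le> 0"
  proof (rule ccontr)
    assume "\<not> ?thesis"
    hence cp: "inner v D > 0" by simp
    have np: "norm D + 1 > 0" by (smt (verit) norm_ge_zero)
    define e where "e = inner v D / (2 * (norm D + 1))"
    have "e > 0" using cp unfolding e_def using norm_ge_zero[of D] by (intro divide_pos_pos) (simp, smt (verit) norm_ge_zero)
    from le[OF this] have "inner v D \<le> e * norm D" .
    also have "e * norm D < inner v D"
    proof -
      have "e * norm D \<le> e * (norm D + 1)" using \<open>e>0\<close> by simp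
      also have "\<dots> = inner v D / 2" unfolding e_def using np by (simp add: field_simps)
      finally show ?thesis using cp by simp
    qed
    finally show False by simp
  qed
  thus ?thesis unfolding D_def by (cases v) simp
qed

lemma frechet_graph_eq:
  fixes f :: "'a::real_inner \<Rightarrow> 'b::real_inner"
  assumes d: "(f has_derivative L) (at z)"
    and v: "v \<in> frechet_normal_cone (fgraph f) (z, f z)"
  shows "inner (fst v) h + inner (snd v) (L h) = 0"
proof -
  have bl: "linear L" using d has_derivative_linear by blast
  have "inner (fst v) (-h) + inner (snd v) (L (-h)) \<le> 0"
    by (rule frechet_graph_le[OF d v])
  moreover have "L (-h) = - L h" using bl by (simp add: linear_neg)
  ultimately show ?thesis using frechet_graph_le[OF d v, of h] by simp
qed

theorem lemma3p3:
  fixes f :: "'a::euclidean_space \<Rightarrow> 'a"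
    and f' :: "'a \<Rightarrow> 'a \<Rightarrow>\<^sub>L 'a"
    and U :: "'a set" and xbar :: 'a and \<epsilon> \<delta> :: real
  assumes U_open: "open U" and xbar_U: "xbar \<in> U"
    and deriv: "\<And>x. x \<in> U \<Longrightarrow> (f has_derivative blinfun_apply (f' x)) (at x)"
    and cont: "continuous_on U f'"
    and eps: "\<epsilon> > 0"
    and delta: "\<delta> > 0" and ball_U: "cball xbar \<delta> \<subseteq> U"
    and est: "\<And>x. x \<in> cball xbar \<delta> \<Longrightarrow>
               norm (f x - f xbar - f' x (x - xbar)) \<le> \<epsilon> * norm (x - xbar)"
  shows "\<forall>x \<in> cball xbar \<delta>. \<forall>(ys, xs) \<in> coderiv_graph f x.
           \<bar>inner xs (x - xbar) - inner ys (f x - f xbar)\<bar>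
             \<le> \<epsilon> * pnorm (xs, ys) * pnorm ((x, f x) - (xbar, f xbar))"
proof (intro ballI, clarify)
  fix x ys xs
  assume xB: "x \<in> cball xbar \<delta>" and cg: "(ys, xs) \<in> coderiv_graph f x"
  have xU: "x \<in> U" using xB ball_U by blast
  have key: "inner xs h = inner ys (f' x h)" for h
  proof -
    from cg xU obtain zs vs where zv: "\<And>k. zs k \<in> fgraph f \<and> vs k \<in> frechet_normal_cone (fgraph f) (zs k)"
      and zl: "zs \<longlonglongrightarrow> (x, f x)" and vl: "vs \<longlonglongrightarrow> (xs, - ys)"
      unfolding coderiv_graph_def limiting_normal_cone_def fgraph_def by auto
    define a where "a k = fst (zs k)" for k
    have za: "zs k = (a k, f (a k))" for k using zv[of k] unfolding a_def fgraph_def by auto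
    have al: "a \<longlonglongrightarrow> x" unfolding a_def using tendsto_fst[OF zl] by simp
    have evU: "\<forall>\<^sub>F k in sequentially. a k \<in> U"
      using al U_open xU by (rule topological_tendstoD)
    have ev0: "\<forall>\<^sub>F k in sequentially.
        inner (fst (vs k)) h + inner (snd (vs k)) (f' (a k) h) = 0"
      using evU
    proof eventually_elim
      case (elim k)
      show ?case using frechet_graph_eq[OF deriv[OF elim], of "vs k" h] zv[of k] za[of k] by simp
    qed
    have "isCont f' x" using cont U_open xU continuous_on_eq_continuous_at by blast
    hence fl: "(\<lambda>k. f' (a k)) \<longlonglongrightarrow> f' x" using al isCont_tendsto_compose by blast
    have lim: "(\<lambda>k. inner (fst (vs k)) h + inner (snd (vs k)) (f' (a k) h))
        \<longlonglongrightarrow> inner xs h + inner (- ys) (f' x h)"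
      using vl fl
      by (intro tendsto_intros blinfun.tendsto tendsto_fst[OF vl, simplified] tendsto_snd[OF vl, simplified]) auto
    have "(\<lambda>k. inner (fst (vs k)) h + inner (snd (vs k)) (f' (a k) h)) \<longlonglongrightarrow> 0"
      using ev0 by (simp add: tendsto_eventually)
    from LIMSEQ_unique[OF lim this] show ?thesis by simp
  qed
  have "\<bar>inner xs (x - xbar) - inner ys (f x - f xbar)\<bar>
      = \<bar>inner ys (f x - f xbar - f' x (x - xbar))\<bar>"
  proof -
    have "inner ys (f x - f xbar - f' x (x - xbar)) = inner ys (f x - f xbar) - inner xs (x - xbar)"
      unfolding inner_diff_right[of ys "f x - f xbar" "f' x (x - xbar)"] key[of "x - xbar"] ..
    thus ?thesis by (simp add: abs_minus_commute)
  qed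
  also have "\<dots> \<le> norm ys * norm (f x - f xbar - f' x (x - xbar))"
    by (rule Cauchy_Schwarz_ineq2)
  also have "\<dots> \<le> norm ys * (\<epsilon> * norm (x - xbar))"
    by (intro mult_left_mono est xB) simp
  also have "\<dots> \<le> pnorm (xs, ys) * (\<epsilon> * pnorm ((x, f x) - (xbar, f xbar)))"
    by (intro mult_mono mult_left_mono) (auto simp: pnorm_def eps less_imp_le le_max_iff_disj)
  finally show "\<bar>inner xs (x - xbar) - inner ys (f x - f xbar)\<bar>
             \<le> \<epsilon> * pnorm (xs, ys) * pnorm ((x, f x) - (xbar, f xbar))" by (simp add: algebra_simps)
qed

end
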